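(* Let $K\in L_2(\mathbb R)$ be a kernel (satisfying the standing assumptions below) with $S_K>0$, and let $f\in L_2(\mathbb R)$ be a probability density with $0<D_f<\infty$. Then for every $n\ge1$, $$n\,\Phi(n,f,K)\le n\,\mathrm{MISE}_f(f_{n,K,S_K/D_f})\le \frac{D_f\,R(K)}{S_K}.$$
   Context: A kernel is an integrable function $K:\mathbb R\to\mathbb R$ with $\int K=1$; standing assumptions: $K$ is bounded, continuous at $0$, and $\int K^2<2K(0)$. For a sample $X_1,\dots,X_n$ i.i.d. with density $f$, bandwidth $h>0$, $f_{n,K,h}(x)=\frac1n\sum_{i=1}^n K_h(x-X_i)$ with $K_h(x)=K(x/h)/h$. $\mathrm{MISE}_f(f_{n,K,h})=E_f\int (f_{n,K,h}-f)^2$, and $\Phi(n,f,K)=\min_{h>0}\mathrm{MISE}_f(f_{n,K,h})$. $R(g)=\int g(x)^2dx$. $\varphi_K(t)=\int e^{itx}K(x)dx$, $\varphi_f(t)=\int e^{itx}f(x)dx$, $S_K=\inf\{t\ge0:|\varphi_K(t)-1|\ne0\}$, $D_f=\sup\{t\ge0:\varphi_f(t)\ne0\}$. *)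

theory Defs
  imports "HOL-Probability.Probability"
begin

definition is_kernel :: "(real \<Rightarrow> real) \<Rightarrow> bool" where
  "is_kernel K \<longleftrightarrow> integrable lborel K \<and> integral\<^sup>L lborel K = 1
     \<and> (\<exists>B. \<forall>x. \<bar>K x\<bar> \<le> B) \<and> isCont K 0
     \<and> integrable lborel (\<lambda>x. (K x)\<^sup>2)
     \<and> integral\<^sup>L lborel (\<lambda>x. (K x)\<^sup>2) < 2 * K 0"

definition is_density :: "(real \<Rightarrow> real) \<Rightarrow> bool" where
  "is_density f \<longleftrightarrow> f \<in> borel_measurable borel \<and> (\<forall>x. 0 \<le> f x)
     \<and> integrable lborel f \<and> integral\<^sup>L lborel f = 1"

definition Rsq :: "(real \<Rightarrow> real) \<Rightarrow> real" where
  "Rsq g = integral\<^sup>L lborel (\<lambda>x. (g x)\<^sup>2)"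

definition phi :: "(real \<Rightarrow> real) \<Rightarrow> real \<Rightarrow> complex" where
  "phi g t = integral\<^sup>L lborel (\<lambda>x. cis (t * x) * complex_of_real (g x))"

text \<open>S_K = inf{t \<ge> 0 : |phi_K(t) - 1| \<noteq> 0} (the set is nonempty by Riemann-Lebesgue).\<close>
definition S_K :: "(real \<Rightarrow> real) \<Rightarrow> real" where
  "S_K K = Inf {t. 0 \<le> t \<and> cmod (phi K t - 1) \<noteq> 0}"

definition D_f :: "(real \<Rightarrow> real) \<Rightarrow> ereal" where
  "D_f f = (SUP t \<in> {t. 0 \<le> t \<and> phi f t \<noteq> 0}. ereal t)"

definition kde :: "nat \<Rightarrow> (real \<Rightarrow> real) \<Rightarrow> real \<Rightarrow> (nat \<Rightarrow> real) \<Rightarrow> real \<Rightarrow> real" where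
  "kde n K h X x = (1 / real n) * (\<Sum>i<n. K ((x - X i) / h) / h)"

definition sample_law :: "nat \<Rightarrow> (real \<Rightarrow> real) \<Rightarrow> (nat \<Rightarrow> real) measure" where
  "sample_law n f = (\<Pi>\<^sub>M i\<in>{..<n}. density lborel (\<lambda>x. ennreal (f x)))"

definition MISE :: "nat \<Rightarrow> (real \<Rightarrow> real) \<Rightarrow> (real \<Rightarrow> real) \<Rightarrow> real \<Rightarrow> ennreal" where
  "MISE n f K h = (\<integral>\<^sup>+ X. (\<integral>\<^sup>+ x. ennreal ((kde n K h X x - f x)\<^sup>2) \<partial>lborel) \<partial>sample_law n f)"

text \<open>Phi(n,f,K) = min over h > 0 of the MISE (written as an infimum).\<close>
definition Phi :: "nat \<Rightarrow> (real \<Rightarrow> real) \<Rightarrow> (real \<Rightarrow> real) \<Rightarrow> ennreal" where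
  "Phi n f K = (INF h \<in> {0<..}. MISE n f K h)"

end

theory Submission
  imports Defs
begin


lemma char_isCont_finite:
  assumes "finite_measure M" "sets M = sets borel"
  shows "isCont (char M) t"
  unfolding continuous_at_sequentially
proof safe
  interpret finite_measure M by fact
  fix X assume X: "X \<longlonglongrightarrow> t"
  have [measurable_cong]: "sets M = sets borel" by fact
  show "(char M \<circ> X) \<longlonglongrightarrow> char M t"
    unfolding comp_def char_def
    by (rule integral_dominated_convergence[where w="\<lambda>_. 1"]) (auto intro!: tendsto_intros X)
qed

lemma char_convolution:
  assumes "finite_measure M" "finite_measure N" "sets M = sets borel" "sets N = sets borel"
  shows "char (M \<star> N) t = char M t * char N t"
proof -
  interpret M: finite_measure M by fact
  interpret N: finite_measure N by fact
  interpret P: pair_sigma_finite M N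
    by (simp add: M.sigma_finite_measure N.sigma_finite_measure pair_sigma_finite_def)
  have [measurable_cong]: "sets M = sets borel" "sets N = sets borel" by fact+
  interpret MN: finite_measure "M \<Otimes>\<^sub>M N"
    by (rule finite_measure_pair_measure) fact+
  have int: "integrable (M \<Otimes>\<^sub>M N) (\<lambda>p. iexp (t * (fst p + snd p)))"
    by (rule MN.integrable_const_bound[where B=1]) (auto simp del: of_real_mult)
  have "char (M \<star> N) t = (\<integral>p. iexp (t * (fst p + snd p)) \<partial>(M \<Otimes>\<^sub>M N))"
    unfolding char_def convolution_def
    by (subst integral_distr) (auto simp: case_prod_beta')
  also have "\<dots> = (\<integral>x. \<integral>y. iexp (t * (fst (x,y) + snd (x,y))) \<partial>N \<partial>M)"
    using P.integral_fst'[OF int] by simp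
  also have "\<dots> = (\<integral>x. iexp (t*x) * char N t \<partial>M)"
    unfolding char_def
    by (intro Bochner_Integration.integral_cong refl)
       (simp add: distrib_left exp_add flip: integral_mult_right_zero)
  also have "\<dots> = char M t * char N t"
    unfolding char_def by simp
  finally show ?thesis .
qed




lemma char_finite_zero:
  assumes "finite_measure M"
  shows "char M 0 = complex_of_real (measure M (space M))"
  unfolding char_def by (simp add: scaleR_conv_of_real)

lemma finite_char_unique:
  assumes fm: "finite_measure M1" "finite_measure M2"
    and sb: "sets M1 = sets borel" "sets M2 = sets borel"
    and ch: "char M1 = char M2"
    and nz: "measure M1 (space M1) \<noteq> 0"
  shows "M1 = M2"
proof -
  interpret M1: finite_measure M1 by fact
  interpret M2: finite_measure M2 by fact
  define c where "c = measure M1 (space M1)"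
  have c2: "measure M2 (space M2) = c"
    using char_finite_zero[OF fm(1)] char_finite_zero[OF fm(2)] ch c_def by simp
  have cpos: "c > 0" using nz c_def by (simp add: zero_less_measure_iff)
  have sp: "space M1 = UNIV" "space M2 = UNIV"
    using sb by (auto dest: sets_eq_imp_space_eq)
  have rd: "real_distribution (density M (\<lambda>_. ennreal (1/c)))"
    if "finite_measure M" "sets M = sets borel" "measure M (space M) = c" for M
  proof -
    interpret finite_measure M by fact
    have "emeasure (density M (\<lambda>_. ennreal (1/c))) (space M) = ennreal (1/c) * ennreal c"
      by (subst emeasure_density_const) (auto simp: emeasure_eq_measure that(3))
    also have "\<dots> = 1" using cpos by (simp flip: ennreal_mult)
    finally have "emeasure (density M (\<lambda>_. ennreal (1/c))) (space M) = 1" .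
    then show ?thesis
      unfolding real_distribution_def real_distribution_axioms_def
      using that by (auto intro!: prob_spaceI)
  qed
  have chd: "char (density M (\<lambda>_. ennreal (1/c))) t = complex_of_real (1/c) * char M t"
    if "sets M = sets borel" for M t
  proof -
    have [measurable_cong]: "sets M = sets borel" by fact
    show ?thesis unfolding char_def
      by (subst integral_density) (auto simp: scaleR_conv_of_real cpos less_imp_le)
  qed
  have eq: "density M1 (\<lambda>_. ennreal (1/c)) = density M2 (\<lambda>_. ennreal (1/c))"
    by (rule Levy_uniqueness[OF rd[OF fm(1) sb(1) c_def[symmetric]] rd[OF fm(2) sb(2) c2]]) (auto simp: fun_eq_iff chd[OF sb(1)] chd[OF sb(2)] ch)
  have bk: "density (density M (\<lambda>_. ennreal (1/c))) (\<lambda>_. ennreal c) = M" for M :: "real measure"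
  proof -
    have "(\<lambda>_::real. ennreal (1/c) * ennreal c) = (\<lambda>_. 1)"
      using cpos by (simp flip: ennreal_mult)
    then show ?thesis by (simp add: density_density_eq density_1)
  qed
  show ?thesis using bk[of M1] bk[of M2] eq by metis
qed




lemma char_density_real:
  fixes g :: "real \<Rightarrow> real"
  assumes [measurable]: "g \<in> borel_measurable borel" and nn: "\<And>x. 0 \<le> g x"
  shows "char (density lborel (\<lambda>x. ennreal (g x))) t = (\<integral>x. g x *\<^sub>R iexp (t * x) \<partial>lborel)"
  unfolding char_def using nn by (subst integral_density) auto

lemma phi_scaled:
  fixes G :: "real \<Rightarrow> real"
  assumes [measurable]: "G \<in> borel_measurable borel" and h: "h > 0"
  shows "(\<integral>x. (G (x/h)/h) *\<^sub>R iexp (t * x) \<partial>lborel) = phi G (t*h)"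
proof -
  have "(\<integral>x. (G (x/h)/h) *\<^sub>R iexp (t * x) \<partial>lborel)
      = \<bar>h\<bar> *\<^sub>R (\<integral>x. (G ((0 + h*x)/h)/h) *\<^sub>R iexp (t * (0 + h*x)) \<partial>lborel)"
    using h by (intro lborel_integral_real_affine) simp
  also have "\<dots> = (\<integral>x. cis (t * h * x) * complex_of_real (G x) \<partial>lborel)"
    using h by (simp add: cis_conv_exp scaleR_conv_of_real mult_ac flip: integral_scaleR_right)
  finally show ?thesis unfolding phi_def .
qed

lemma phi_neg:
  fixes g :: "real \<Rightarrow> real"
  shows "phi g (-t) = cnj (phi g t)"
proof -
  have "phi g (-t) = (\<integral>x. cnj (cis (t * x) * complex_of_real (g x)) \<partial>lborel)"
    unfolding phi_def by (intro Bochner_Integration.integral_cong) (auto simp: cis_cnj)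
  also have "\<dots> = cnj (phi g t)" unfolding phi_def by (rule Bochner_Integration.integral_cnj)
  finally show ?thesis .
qed

lemma cont_eq_except2:
  fixes F G :: "real \<Rightarrow> complex"
  assumes "\<And>t. isCont F t" "\<And>t. isCont G t" "\<And>t. t \<noteq> a \<Longrightarrow> t \<noteq> b \<Longrightarrow> F t = G t"
  shows "F = G"
proof
  fix t
  have ev: "eventually (\<lambda>x. F x = G x) (at t)"
  proof -
    have "eventually (\<lambda>x. x \<noteq> a \<and> x \<noteq> b) (at t)"
      by (intro eventually_conj eventually_neq_at_within)
    then show ?thesis by eventually_elim (use assms(3) in auto)
  qed
  have "(G \<longlongrightarrow> F t) (at t)"
    using Lim_transform_eventually[OF assms(1)[unfolded isCont_def] ev] .
  moreover have "(G \<longlongrightarrow> G t) (at t)" using assms(2) by (simp add: isCont_def)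
  ultimately show "F t = G t" by (rule LIM_unique)
qed




lemma conv_part:
  fixes G f :: "real \<Rightarrow> real"
  assumes Gm[measurable]: "G \<in> borel_measurable borel" and Gnn: "\<And>x. 0 \<le> G x"
    and GB: "\<And>x. G x \<le> B" and Gi: "integrable lborel G"
    and fd: "is_density f" and h: "h > 0"
  shows "\<And>x. integrable lborel (\<lambda>y. G((x-y)/h)/h * f y)"
    and "\<And>x. 0 \<le> (\<integral>y. G((x-y)/h)/h * f y \<partial>lborel)"
    and "\<And>x. (\<integral>y. G((x-y)/h)/h * f y \<partial>lborel) \<le> B/h"
    and "(\<lambda>x. \<integral>y. G((x-y)/h)/h * f y \<partial>lborel) \<in> borel_measurable borel"
    and "finite_measure (density lborel (\<lambda>y. ennreal (G(y/h)/h)))"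
    and "density lborel (\<lambda>y. ennreal (G(y/h)/h)) \<star> density lborel (\<lambda>y. ennreal (f y))
         = density lborel (\<lambda>x. ennreal (\<integral>y. G((x-y)/h)/h * f y \<partial>lborel))"
    and "char (density lborel (\<lambda>y. ennreal (G(y/h)/h))) t = phi G (t*h)"
proof -
  have fm[measurable]: "f \<in> borel_measurable borel" and fnn: "\<And>x. 0 \<le> f x"
    and fi: "integrable lborel f" and f1: "integral\<^sup>L lborel f = 1"
    using fd unfolding is_density_def by auto
  have B0: "0 \<le> B" using Gnn[of 0] GB[of 0] by simp
  show int: "integrable lborel (\<lambda>y. G((x-y)/h)/h * f y)" for x
  proof -
    have A: "integrable lborel (\<lambda>y. (B/h) * f y)" using fi by simp
    have C: "AE y in lborel. norm (G((x-y)/h)/h * f y) \<le> norm ((B/h) * f y)"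
      using h B0 Gnn GB fnn
      by (auto simp: abs_mult intro!: mult_right_mono divide_right_mono)
    show ?thesis by (rule Bochner_Integration.integrable_bound[OF A _ C]) measurable
  qed
  show nn: "0 \<le> (\<integral>y. G((x-y)/h)/h * f y \<partial>lborel)" for x
    using h Gnn fnn by (intro integral_nonneg_AE) auto
  show "(\<integral>y. G((x-y)/h)/h * f y \<partial>lborel) \<le> B/h" for x
  proof -
    have "(\<integral>y. G((x-y)/h)/h * f y \<partial>lborel) \<le> (\<integral>y. (B/h) * f y \<partial>lborel)"
      using int[of x] fi h Gnn GB fnn
      by (intro integral_mono) (auto intro!: mult_right_mono divide_right_mono)
    also have "\<dots> = B/h" using f1 by simp
    finally show ?thesis .
  qed
  have eqn: "(\<integral>\<^sup>+y. ennreal (G((x-y)/h)/h) * ennreal (f y) \<partial>lborel)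
      = ennreal (\<integral>y. G((x-y)/h)/h * f y \<partial>lborel)" for x
  proof -
    have "(\<integral>\<^sup>+y. ennreal (G((x-y)/h)/h) * ennreal (f y) \<partial>lborel)
        = (\<integral>\<^sup>+y. ennreal (G((x-y)/h)/h * f y) \<partial>lborel)"
      using h Gnn fnn by (intro nn_integral_cong) (simp add: ennreal_mult[symmetric] divide_nonneg_pos)
    also have "\<dots> = ennreal (\<integral>y. G((x-y)/h)/h * f y \<partial>lborel)"
      using int[of x] h Gnn fnn by (intro nn_integral_eq_integral) auto
    finally show ?thesis .
  qed
  have meas: "(\<lambda>x. \<integral>\<^sup>+y. ennreal (G((x-y)/h)/h) * ennreal (f y) \<partial>lborel) \<in> borel_measurable borel"
    by measurable
  show "(\<lambda>x. \<integral>y. G((x-y)/h)/h * f y \<partial>lborel) \<in> borel_measurable borel"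
  proof -
    have "(\<lambda>x. enn2real (\<integral>\<^sup>+y. ennreal (G((x-y)/h)/h) * ennreal (f y) \<partial>lborel)) \<in> borel_measurable borel"
      using meas by measurable
    moreover have "(\<lambda>x. enn2real (\<integral>\<^sup>+y. ennreal (G((x-y)/h)/h) * ennreal (f y) \<partial>lborel))
        = (\<lambda>x. \<integral>y. G((x-y)/h)/h * f y \<partial>lborel)"
      using eqn nn by simp
    ultimately show ?thesis by simp
  qed
  have Gh_int: "(\<integral>\<^sup>+y. ennreal (G(y/h)/h) \<partial>lborel) = ennreal (integral\<^sup>L lborel G)"
  proof -
    have "(\<integral>\<^sup>+y. ennreal (G(y/h)/h) \<partial>lborel) = \<bar>h\<bar> * (\<integral>\<^sup>+y. ennreal (G((0 + h*y)/h)/h) \<partial>lborel)"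
      using h by (intro nn_integral_real_affine) auto
    also have "\<dots> = (\<integral>\<^sup>+y. ennreal (G y) \<partial>lborel)"
      using h Gnn by (simp flip: nn_integral_cmult ennreal_mult add: divide_nonneg_pos)
    also have "\<dots> = ennreal (integral\<^sup>L lborel G)"
      using Gi Gnn by (intro nn_integral_eq_integral) auto
    finally show ?thesis .
  qed
  show fmG: "finite_measure (density lborel (\<lambda>y. ennreal (G(y/h)/h)))"
    by (rule finite_measureI) (simp add: emeasure_density Gh_int)
  have fmf: "finite_measure (density lborel (\<lambda>y. ennreal (f y)))"
  proof (rule finite_measureI)
    have "(\<integral>\<^sup>+y. ennreal (f y) \<partial>lborel) = ennreal 1"
      using fi fnn f1 by (subst nn_integral_eq_integral) auto
    then show "emeasure (density lborel (\<lambda>y. ennreal (f y))) (space (density lborel (\<lambda>y. ennreal (f y)))) \<noteq> \<infinity>"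
      by (simp add: emeasure_density)
  qed
  show "density lborel (\<lambda>y. ennreal (G(y/h)/h)) \<star> density lborel (\<lambda>y. ennreal (f y))
         = density lborel (\<lambda>x. ennreal (\<integral>y. G((x-y)/h)/h * f y \<partial>lborel))"
    by (subst convolution_density) (use fmG fmf eqn in auto)
  show "char (density lborel (\<lambda>y. ennreal (G(y/h)/h))) t = phi G (t*h)"
  proof -
    have "char (density lborel (\<lambda>y. ennreal (G(y/h)/h))) t = (\<integral>x. (G (x/h)/h) *\<^sub>R iexp (t * x) \<partial>lborel)"
      using h Gnn by (intro char_density_real) (auto simp: divide_nonneg_pos)
    also have "\<dots> = phi G (t*h)" using h by (rule phi_scaled[OF Gm])
    finally show ?thesis .
  qed
qed




lemma phiK_one_pos:
  assumes "0 \<le> s" "s < S_K K" shows "phi K s = 1"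
proof (rule ccontr)
  assume "phi K s \<noteq> 1"
  then have "s \<in> {t. 0 \<le> t \<and> cmod (phi K t - 1) \<noteq> 0}" using assms by auto
  then have "S_K K \<le> s" unfolding S_K_def
    by (intro cInf_lower) (auto intro!: bdd_belowI[where m=0])
  then show False using assms by simp
qed

lemma phiK_one:
  assumes "\<bar>s\<bar> < S_K K" shows "phi K s = 1"
proof (cases "0 \<le> s")
  case True then show ?thesis using assms phiK_one_pos by auto
next
  case False
  then have "phi K (-s) = 1" using assms by (intro phiK_one_pos) auto
  then show ?thesis using phi_neg[of K "-s"] by simp
qed

lemma phi_f_support:
  assumes "phi f t \<noteq> 0" "D_f f = ereal D" shows "\<bar>t\<bar> \<le> D"
proof -
  have *: "s \<le> D" if "0 \<le> s" "phi f s \<noteq> 0" for s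
  proof -
    have "ereal s \<le> D_f f" unfolding D_f_def using that by (intro SUP_upper) auto
    then show ?thesis using assms(2) by simp
  qed
  show ?thesis
  proof (cases "0 \<le> t")
    case True then show ?thesis using *[OF True assms(1)] by simp
  next
    case False
    have "phi f (-t) \<noteq> 0" using assms(1) phi_neg[of f t] by auto
    then show ?thesis using *[of "-t"] False by simp
  qed
qed

lemma char_density_add:
  fixes g1 g2 :: "real \<Rightarrow> real"
  assumes [measurable]: "g1 \<in> borel_measurable borel" "g2 \<in> borel_measurable borel"
    and nn: "\<And>x. 0 \<le> g1 x" "\<And>x. 0 \<le> g2 x"
    and fin: "finite_measure (density lborel (\<lambda>x. ennreal (g1 x)))" "finite_measure (density lborel (\<lambda>x. ennreal (g2 x)))"
  shows "char (density lborel (\<lambda>x. ennreal (g1 x + g2 x))) t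
     = char (density lborel (\<lambda>x. ennreal (g1 x))) t + char (density lborel (\<lambda>x. ennreal (g2 x))) t"
proof -
  have int: "integrable lborel (\<lambda>x. g x *\<^sub>R iexp (t * x))"
    if [measurable]: "g \<in> borel_measurable borel" and gnn: "\<And>x. 0 \<le> g x"
      and "finite_measure (density lborel (\<lambda>x. ennreal (g x)))" for g
  proof -
    interpret finite_measure "density lborel (\<lambda>x. ennreal (g x))" by fact
    have "integrable (density lborel (\<lambda>x. ennreal (g x))) (\<lambda>x. iexp (t * x))"
      by (rule integrable_const_bound[where B=1]) (auto simp del: of_real_mult)
    then show ?thesis using gnn by (subst (asm) integrable_density) auto
  qed
  have "char (density lborel (\<lambda>x. ennreal (g1 x + g2 x))) t = (\<integral>x. (g1 x + g2 x) *\<^sub>R iexp (t * x) \<partial>lborel)"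
    using nn by (intro char_density_real) (auto intro: add_nonneg_nonneg)
  also have "\<dots> = (\<integral>x. g1 x *\<^sub>R iexp (t * x) \<partial>lborel) + (\<integral>x. g2 x *\<^sub>R iexp (t * x) \<partial>lborel)"
    unfolding scaleR_add_left
    by (rule Bochner_Integration.integral_add[OF int[OF _ nn(1) fin(1)] int[OF _ nn(2) fin(2)]]) auto
  finally show ?thesis using nn by (simp add: char_density_real)
qed




lemma bias_zero:
  assumes K: "is_kernel K" and S: "S_K K > 0" and fd: "is_density f"
    and D: "0 < D_f f" "D_f f < \<infinity>"
    and hdef: "h = S_K K / real_of_ereal (D_f f)"
  shows "AE x in lborel. (\<integral>y. K((x-y)/h)/h * f y \<partial>lborel) = f x"
proof -
  obtain B where KB: "\<And>x. \<bar>K x\<bar> \<le> B" using K unfolding is_kernel_def by auto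
  have Ki: "integrable lborel K" using K unfolding is_kernel_def by auto
  have Km[measurable]: "K \<in> borel_measurable borel"
    using borel_measurable_integrable[OF Ki] by simp
  have fm[measurable]: "f \<in> borel_measurable borel" and fnn: "\<And>x. 0 \<le> f x"
    and fi: "integrable lborel f" and f1: "integral\<^sup>L lborel f = 1"
    using fd unfolding is_density_def by auto
  define Dr where "Dr = real_of_ereal (D_f f)"
  have DfDr: "D_f f = ereal Dr" using D unfolding Dr_def by (cases "D_f f") auto
  have Dr0: "Dr > 0" using D DfDr by simp
  have h0: "h > 0" using hdef S Dr0 Dr_def by simp
  define Kp where "Kp = (\<lambda>x. max (K x) 0)"
  define Kn where "Kn = (\<lambda>x. max (- K x) 0)"
  have Kpm[measurable]: "Kp \<in> borel_measurable borel" and Knm[measurable]: "Kn \<in> borel_measurable borel"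
    unfolding Kp_def Kn_def by measurable
  have Kpi: "integrable lborel Kp"
    by (rule Bochner_Integration.integrable_bound[OF Ki]) (auto simp: Kp_def)
  have Kni: "integrable lborel Kn"
    by (rule Bochner_Integration.integrable_bound[OF Ki]) (auto simp: Kn_def)
  have KpB: "Kp x \<le> max B 0" for x using KB[of x] by (auto simp: Kp_def)
  have KnB: "Kn x \<le> max B 0" for x using KB[of x] by (auto simp: Kn_def)
  have Kdiff: "K x = Kp x - Kn x" for x by (auto simp: Kp_def Kn_def)
  note P = conv_part[OF Kpm _ KpB Kpi fd h0, unfolded Kp_def[symmetric]]
  note N = conv_part[OF Knm _ KnB Kni fd h0, unfolded Kn_def[symmetric]]
  define gp where "gp = (\<lambda>x. \<integral>y. Kp((x-y)/h)/h * f y \<partial>lborel)"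
  define gn where "gn = (\<lambda>x. \<integral>y. Kn((x-y)/h)/h * f y \<partial>lborel)"
  have Pi: "\<And>x. integrable lborel (\<lambda>y. Kp((x-y)/h)/h * f y)" and gpnn: "\<And>x. 0 \<le> gp x"
    and gpm[measurable]: "gp \<in> borel_measurable borel"
    and fmP: "finite_measure (density lborel (\<lambda>y. ennreal (Kp(y/h)/h)))"
    and convP: "density lborel (\<lambda>y. ennreal (Kp(y/h)/h)) \<star> density lborel (\<lambda>y. ennreal (f y))
         = density lborel (\<lambda>x. ennreal (gp x))"
    and charP: "\<And>t. char (density lborel (\<lambda>y. ennreal (Kp(y/h)/h))) t = phi Kp (t*h)"
    using P unfolding gp_def by (auto simp: Kp_def)
  have Ni: "\<And>x. integrable lborel (\<lambda>y. Kn((x-y)/h)/h * f y)" and gnnn: "\<And>x. 0 \<le> gn x"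
    and gnm[measurable]: "gn \<in> borel_measurable borel"
    and fmN: "finite_measure (density lborel (\<lambda>y. ennreal (Kn(y/h)/h)))"
    and convN: "density lborel (\<lambda>y. ennreal (Kn(y/h)/h)) \<star> density lborel (\<lambda>y. ennreal (f y))
         = density lborel (\<lambda>x. ennreal (gn x))"
    and charN: "\<And>t. char (density lborel (\<lambda>y. ennreal (Kn(y/h)/h))) t = phi Kn (t*h)"
    using N unfolding gn_def by (auto simp: Kn_def)
  define A where "A = density lborel (\<lambda>x. ennreal (gp x))"
  define Bm where "Bm = density lborel (\<lambda>x. ennreal (f x + gn x))"
  define Mf where "Mf = density lborel (\<lambda>y. ennreal (f y))"
  have fint: "(\<integral>\<^sup>+y. ennreal (f y) \<partial>lborel) = 1"
    using fi fnn f1 by (subst nn_integral_eq_integral) auto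
  have fmf: "finite_measure Mf"
    by (rule finite_measureI) (simp add: Mf_def emeasure_density fint)
  have sMf[measurable_cong]: "sets Mf = sets borel" by (simp add: Mf_def)
  have finA: "finite_measure A"
    unfolding A_def convP[symmetric] using fmP fmf unfolding Mf_def
    by (intro convolution_finite) auto
  have finGn: "finite_measure (density lborel (\<lambda>x. ennreal (gn x)))"
    unfolding convN[symmetric] using fmN fmf unfolding Mf_def
    by (intro convolution_finite) auto
  have gnint: "(\<integral>\<^sup>+x. ennreal (gn x) \<partial>lborel) < \<infinity>"
    using finite_measure.emeasure_finite[OF finGn, of UNIV]
    by (simp add: emeasure_density top.not_eq_extremum)
  have Bmeas: "emeasure Bm UNIV = 1 + (\<integral>\<^sup>+x. ennreal (gn x) \<partial>lborel)"
  proof -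
    have "emeasure Bm UNIV = (\<integral>\<^sup>+x. ennreal (f x) + ennreal (gn x) \<partial>lborel)"
      using fnn gnnn by (simp add: Bm_def emeasure_density ennreal_plus)
    also have "\<dots> = 1 + (\<integral>\<^sup>+x. ennreal (gn x) \<partial>lborel)"
      by (subst nn_integral_add) (auto simp: fint)
    finally show ?thesis .
  qed
  have finB: "finite_measure Bm"
    by (rule finite_measureI) (use Bmeas gnint in \<open>auto simp: Bm_def\<close>)
  have charMf: "char Mf t = phi f t" for t
  proof -
    have "char Mf t = (\<integral>x. f x *\<^sub>R iexp (t * x) \<partial>lborel)"
      unfolding Mf_def using fnn by (intro char_density_real) auto
    also have "\<dots> = phi f t" unfolding phi_def
      by (intro Bochner_Integration.integral_cong) (auto simp: cis_conv_exp scaleR_conv_of_real mult_ac)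
    finally show ?thesis .
  qed
  have charA: "char A t = phi Kp (t*h) * phi f t" for t
    unfolding A_def convP[symmetric] using fmP fmf
    by (subst char_convolution) (auto simp: charP charMf[unfolded Mf_def] Mf_def)
  have charB: "char Bm t = phi f t + phi Kn (t*h) * phi f t" for t
  proof -
    have "char Bm t = char Mf t + char (density lborel (\<lambda>x. ennreal (gn x))) t"
      unfolding Bm_def Mf_def
      by (rule char_density_add) (use fnn gnnn fmf finGn in \<open>auto simp: Mf_def\<close>)
    also have "char (density lborel (\<lambda>x. ennreal (gn x))) t = phi Kn (t*h) * phi f t"
      unfolding convN[symmetric] using fmN fmf
      by (subst char_convolution) (auto simp: charN charMf[unfolded Mf_def] Mf_def)
    finally show ?thesis by (simp add: charMf)
  qed
  have phiK: "phi K s = phi Kp s - phi Kn s" for s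
  proof -
    have ii: "integrable lborel (\<lambda>x. cis (s * x) * complex_of_real (G x))"
      if "integrable lborel G" and [measurable]: "G \<in> borel_measurable borel" for G
    proof (rule Bochner_Integration.integrable_bound[OF integrable_norm[OF that(1)]])
      show "(\<lambda>x. cis (s * x) * complex_of_real (G x)) \<in> borel_measurable lborel"
        unfolding cis_conv_exp by measurable
    qed (auto simp: norm_mult)
    have "phi K s = (\<integral>x. cis (s * x) * complex_of_real (Kp x) - cis (s * x) * complex_of_real (Kn x) \<partial>lborel)"
      unfolding phi_def by (intro Bochner_Integration.integral_cong) (auto simp: Kdiff algebra_simps)
    also have "\<dots> = phi Kp s - phi Kn s" unfolding phi_def
      by (rule Bochner_Integration.integral_diff[OF ii[OF Kpi Kpm] ii[OF Kni Knm]])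
    finally show ?thesis .
  qed
  have key: "phi Kp (t*h) * phi f t = phi f t + phi Kn (t*h) * phi f t" if "t \<noteq> Dr" "t \<noteq> -Dr" for t
  proof (cases "phi f t = 0")
    case True then show ?thesis by simp
  next
    case False
    have "\<bar>t\<bar> \<le> Dr" by (rule phi_f_support[OF False DfDr])
    then have "\<bar>t\<bar> < Dr" using that by auto
    then have "\<bar>t*h\<bar> < Dr * h" using h0 by (simp add: abs_mult)
    also have "Dr * h = S_K K" using hdef Dr_def Dr0 by simp
    finally have "phi K (t*h) = 1" by (rule phiK_one)
    then have "phi Kp (t*h) = 1 + phi Kn (t*h)" using phiK[of "t*h"] by (simp add: algebra_simps)
    then show ?thesis by (simp add: algebra_simps)
  qed
  have sA: "sets A = sets borel" and sB: "sets Bm = sets borel" by (simp_all add: A_def Bm_def)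
  have chEq: "char Bm = char A"
    by (rule cont_eq_except2[where a=Dr and b="-Dr"])
       (auto intro: char_isCont_finite[OF finA sA] char_isCont_finite[OF finB sB]
             simp: charA charB key)
  have "measure Bm (space Bm) \<noteq> 0"
  proof -
    have "emeasure Bm (space Bm) \<ge> 1" using Bmeas by (simp add: Bm_def)
    then show ?thesis using finite_measure.emeasure_eq_measure[OF finB, of "space Bm"] by auto
  qed
  then have "Bm = A" by (rule finite_char_unique[OF finB finA sB sA chEq])
  then have "AE x in lborel. ennreal (f x + gn x) = ennreal (gp x)"
    unfolding A_def Bm_def by (intro sigma_finite_measure.density_unique[OF sigma_finite_lborel]) auto
  then have AEg: "AE x in lborel. gp x = f x + gn x"
  proof eventually_elim
    fix x assume "ennreal (f x + gn x) = ennreal (gp x)"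
    then show "gp x = f x + gn x"
      using fnn[of x] gnnn[of x] gpnn[of x] by (subst (asm) ennreal_inj) auto
  qed
  show ?thesis using AEg
  proof eventually_elim
    fix x assume gx: "gp x = f x + gn x"
    have "(\<integral>y. K((x-y)/h)/h * f y \<partial>lborel)
        = (\<integral>y. Kp((x-y)/h)/h * f y - Kn((x-y)/h)/h * f y \<partial>lborel)"
      by (intro Bochner_Integration.integral_cong) (auto simp: Kdiff diff_divide_distrib left_diff_distrib)
    also have "\<dots> = gp x - gn x" unfolding gp_def gn_def
      by (rule Bochner_Integration.integral_diff[OF Pi Ni])
    finally show "(\<integral>y. K((x-y)/h)/h * f y \<partial>lborel) = f x" using gx by simp
  qed
qed




lemma pi_integral_one:
  fixes g :: "'a \<Rightarrow> real"
  assumes "prob_space M" "finite I" "i \<in> I" "integrable M g"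
  shows "(\<integral>X. g (X i) \<partial>Pi\<^sub>M I (\<lambda>_. M)) = integral\<^sup>L M g"
proof -
  interpret prob_space M by fact
  interpret product_sigma_finite "\<lambda>_. M" by unfold_locales
  define F where "F = (\<lambda>k. if k = i then g else (\<lambda>_. 1::real))"
  have "(\<integral>X. (\<Prod>k\<in>I. F k (X k)) \<partial>Pi\<^sub>M I (\<lambda>_. M)) = (\<Prod>k\<in>I. integral\<^sup>L M (F k))"
    by (rule product_integral_prod) (use assms in \<open>auto simp: F_def\<close>)
  moreover have "(\<Prod>k\<in>I. F k (X k)) = g (X i)" for X
    using assms(2,3) by (simp add: F_def prod.remove[of I i] prod.neutral)
  moreover have "(\<Prod>k\<in>I. integral\<^sup>L M (F k)) = integral\<^sup>L M g"
    using assms(2,3) by (simp add: F_def prod.remove[of I i] prod.neutral prob_space)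
  ultimately show ?thesis by simp
qed

lemma pi_integral_two:
  fixes g1 g2 :: "'a \<Rightarrow> real"
  assumes "prob_space M" "finite I" "i \<in> I" "j \<in> I" "i \<noteq> j" "integrable M g1" "integrable M g2"
  shows "(\<integral>X. g1 (X i) * g2 (X j) \<partial>Pi\<^sub>M I (\<lambda>_. M)) = integral\<^sup>L M g1 * integral\<^sup>L M g2"
proof -
  interpret prob_space M by fact
  interpret product_sigma_finite "\<lambda>_. M" by unfold_locales
  define F where "F = (\<lambda>k. if k = i then g1 else if k = j then g2 else (\<lambda>_. 1::real))"
  have "(\<integral>X. (\<Prod>k\<in>I. F k (X k)) \<partial>Pi\<^sub>M I (\<lambda>_. M)) = (\<Prod>k\<in>I. integral\<^sup>L M (F k))"
    by (rule product_integral_prod) (use assms in \<open>auto simp: F_def\<close>)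
  moreover have "(\<Prod>k\<in>I. F k (X k)) = g1 (X i) * g2 (X j)" for X
    using assms(2-5) by (simp add: F_def prod.remove[of I i] prod.remove[of "I - {i}" j] prod.neutral)
  moreover have "(\<Prod>k\<in>I. integral\<^sup>L M (F k)) = integral\<^sup>L M g1 * integral\<^sup>L M g2"
    using assms(2-5) by (simp add: F_def prod.remove[of I i] prod.remove[of "I - {i}" j] prod.neutral prob_space)
  ultimately show ?thesis by simp
qed




lemma var_bound:
  fixes Y :: "real \<Rightarrow> real" and M :: "real measure"
  assumes pM: "prob_space M" and sM: "sets M = sets borel" and n: "n \<ge> 1"
    and Ym[measurable]: "Y \<in> borel_measurable borel" and YB: "\<And>v. \<bar>Y v\<bar> \<le> C"
  shows "(\<integral>\<^sup>+X. ennreal (((1/real n) * (\<Sum>i<n. Y (X i)) - c)\<^sup>2) \<partial>Pi\<^sub>M {..<n} (\<lambda>_. M))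
      \<le> ennreal ((integral\<^sup>L M Y - c)\<^sup>2 + (\<integral>v. (Y v)\<^sup>2 \<partial>M) / n)"
proof -
  interpret M: prob_space M by fact
  define P where "P = Pi\<^sub>M {..<n} (\<lambda>_. M)"
  interpret P: prob_space P unfolding P_def by (intro prob_space_PiM pM)
  have [measurable_cong]: "sets M = sets borel" by fact
  define \<mu> where "\<mu> = integral\<^sup>L M Y"
  define d where "d = \<mu> - c"
  define v where "v = (\<integral>y. (Y y - \<mu>)\<^sup>2 \<partial>M)"
  define W where "W = (\<lambda>(i::nat) (X::nat \<Rightarrow> real). Y (X i) - \<mu>)"
  have C0: "0 \<le> C" using YB[of 0] by simp
  have Yint: "integrable M Y" by (rule M.integrable_const_bound[where B=C]) (use YB in auto)
  have YY: "\<bar>Y x * Y x\<bar> \<le> C * C" for x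
    using mult_mono[OF YB[of x] YB[of x] C0 abs_ge_zero] by (simp add: abs_mult)
  have Y2int: "integrable M (\<lambda>y. (Y y)\<^sup>2)"
    by (rule M.integrable_const_bound[where B="C*C"])
       (use YY in \<open>auto simp: power2_eq_square\<close>)
  have Wm[measurable]: "W i \<in> borel_measurable P" if "i < n" for i
  proof -
    have YM: "Y \<in> borel_measurable M" by measurable
    show ?thesis unfolding W_def P_def
    proof (intro borel_measurable_diff borel_measurable_const)
      have "(\<lambda>X. X i) \<in> Pi\<^sub>M {..<n} (\<lambda>_. M) \<rightarrow>\<^sub>M M"
        using measurable_component_singleton[of i "{..<n}" "\<lambda>_. M"] that by simp
      from measurable_compose[OF this YM]
      show "(\<lambda>X. Y (X i)) \<in> borel_measurable (Pi\<^sub>M {..<n} (\<lambda>_. M))" .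
    qed
  qed
  have WB: "\<bar>W i X\<bar> \<le> 2*C" for i X
  proof -
    have "\<bar>\<mu>\<bar> \<le> (\<integral>y. norm (Y y) \<partial>M)" unfolding \<mu>_def
      using integral_norm_bound[of M Y] by simp
    also have "\<dots> \<le> (\<integral>y. C \<partial>M)"
      using YB Yint by (intro Bochner_Integration.integral_mono) auto
    also have "\<dots> = C" by (simp add: M.prob_space)
    finally have "\<bar>\<mu>\<bar> \<le> C" .
    then show ?thesis unfolding W_def using YB[of "X i"] by linarith
  qed
  have Wint: "integrable P (W i)" if "i < n" for i
    by (rule P.integrable_const_bound[where B="2*C"]) (use WB that in auto)
  have WWint: "integrable P (\<lambda>X. W i X * W j X)" if "i < n" "j < n" for i j
  proof (rule P.integrable_const_bound[where B="2*C*(2*C)"])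
    have "\<bar>W i X * W j X\<bar> \<le> 2*C*(2*C)" for X
      using mult_mono[OF WB[of i X] WB[of j X]] C0 by (simp add: abs_mult)
    then show "AE X in P. norm (W i X * W j X) \<le> 2*C*(2*C)" by simp
  qed (use that in auto)
  have EW: "integral\<^sup>L P (W i) = 0" if "i < n" for i
  proof -
    have "integral\<^sup>L P (W i) = (\<integral>y. Y y - \<mu> \<partial>M)"
      unfolding P_def W_def using that Yint by (intro pi_integral_one[OF pM]) auto
    also have "\<dots> = 0" using Yint by (simp add: \<mu>_def M.prob_space)
    finally show ?thesis .
  qed
  have EWW: "(\<integral>X. W i X * W j X \<partial>P) = (if i = j then v else 0)" if "i < n" "j < n" for i j
  proof (cases "i = j")
    case True
    have "(\<integral>X. W i X * W j X \<partial>P) = (\<integral>X. (Y (X i) - \<mu>)\<^sup>2 \<partial>P)"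
      using True by (simp add: W_def power2_eq_square)
    also have "\<dots> = v" unfolding P_def v_def
      using that Yint Y2int by (intro pi_integral_one[OF pM])
        (auto simp: power2_diff intro!: Bochner_Integration.integrable_diff)
    finally show ?thesis using True by simp
  next
    case False
    have "(\<integral>X. W i X * W j X \<partial>P) = (\<integral>y. Y y - \<mu> \<partial>M) * (\<integral>y. Y y - \<mu> \<partial>M)"
      unfolding P_def W_def using that False Yint by (intro pi_integral_two[OF pM]) auto
    also have "\<dots> = 0" using Yint by (simp add: \<mu>_def M.prob_space)
    finally show ?thesis using False by simp
  qed
  have i1: "integrable P (\<lambda>X. \<Sum>i<n. W i X)"
    using Wint by (intro Bochner_Integration.integrable_sum) auto
  have i2: "integrable P (\<lambda>X. \<Sum>i<n. \<Sum>j<n. W i X * W j X)"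
    using WWint by (intro Bochner_Integration.integrable_sum) auto
  have Zeq: "((1/real n) * (\<Sum>i<n. Y (X i)) - c)\<^sup>2
      = d\<^sup>2 + (2*d/n) * (\<Sum>i<n. W i X) + (1/real n)\<^sup>2 * (\<Sum>i<n. \<Sum>j<n. W i X * W j X)" for X
  proof -
    have "(1/real n) * (\<Sum>i<n. Y (X i)) - c = (1/real n) * (\<Sum>i<n. W i X) + d"
      using n by (simp add: W_def d_def sum_subtractf field_simps)
    then show ?thesis
      by (simp add: power2_eq_square sum_product algebra_simps)
  qed
  have "(\<integral>X. ((1/real n) * (\<Sum>i<n. Y (X i)) - c)\<^sup>2 \<partial>P)
      = (\<integral>X. d\<^sup>2 + (2*d/n) * (\<Sum>i<n. W i X) + (1/real n)\<^sup>2 * (\<Sum>i<n. \<Sum>j<n. W i X * W j X) \<partial>P)"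
    by (simp only: Zeq)
  also have "\<dots> = d\<^sup>2 + (2*d/n) * (\<Sum>i<n. integral\<^sup>L P (W i)) + (1/real n)\<^sup>2 * (\<Sum>i<n. \<Sum>j<n. \<integral>X. W i X * W j X \<partial>P)"
  proof -
    have e1: "(\<integral>X. (\<Sum>i<n. W i X) \<partial>P) = (\<Sum>i<n. integral\<^sup>L P (W i))"
      using Wint by (intro Bochner_Integration.integral_sum) auto
    have e2: "(\<integral>X. (\<Sum>i<n. \<Sum>j<n. W i X * W j X) \<partial>P) = (\<Sum>i<n. \<Sum>j<n. \<integral>X. W i X * W j X \<partial>P)"
      using WWint by (subst Bochner_Integration.integral_sum)
        (auto intro!: Bochner_Integration.integrable_sum sum.cong Bochner_Integration.integral_sum)
    show ?thesis
      using i1 i2 by (simp add: e1 e2 P.prob_space)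
  qed
  also have "\<dots> = d\<^sup>2 + (1/real n)\<^sup>2 * (real n * v)"
    by (simp add: EW EWW)
  also have "\<dots> = d\<^sup>2 + v / n" using n by (simp add: power2_eq_square)
  finally have Ieq: "(\<integral>X. ((1/real n) * (\<Sum>i<n. Y (X i)) - c)\<^sup>2 \<partial>P) = d\<^sup>2 + v / n" .
  have vle: "v \<le> (\<integral>y. (Y y)\<^sup>2 \<partial>M)"
  proof -
    have "v = (\<integral>y. (Y y)\<^sup>2 - 2*\<mu> * Y y + \<mu>\<^sup>2 \<partial>M)"
      unfolding v_def by (intro Bochner_Integration.integral_cong) (auto simp: power2_diff algebra_simps)
    also have "\<dots> = (\<integral>y. (Y y)\<^sup>2 \<partial>M) - 2*\<mu>*\<mu> + \<mu>\<^sup>2"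
      using Yint Y2int by (simp add: M.prob_space \<mu>_def)
    finally show ?thesis by (simp add: power2_eq_square)
  qed
  have Zint: "integrable P (\<lambda>X. ((1/real n) * (\<Sum>i<n. Y (X i)) - c)\<^sup>2)"
    unfolding Zeq using i1 i2 by simp
  have "(\<integral>\<^sup>+X. ennreal (((1/real n) * (\<Sum>i<n. Y (X i)) - c)\<^sup>2) \<partial>P)
      = ennreal (d\<^sup>2 + v / n)"
    using Zint by (subst nn_integral_eq_integral) (auto simp del: times_divide_eq_left divide_inverse simp add: Ieq[symmetric])
  also have "\<dots> \<le> ennreal ((integral\<^sup>L M Y - c)\<^sup>2 + (\<integral>v. (Y v)\<^sup>2 \<partial>M) / n)"
    using vle n by (intro ennreal_leI) (auto simp: d_def \<mu>_def intro!: divide_right_mono)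
  finally show ?thesis unfolding P_def .
qed




lemma density_prob:
  assumes "is_density f"
  shows "prob_space (density lborel (\<lambda>x. ennreal (f x)))"
proof -
  have fm[measurable]: "f \<in> borel_measurable borel" and fnn: "\<And>x. 0 \<le> f x"
    and fi: "integrable lborel f" and f1: "integral\<^sup>L lborel f = 1"
    using assms unfolding is_density_def by auto
  have "(\<integral>\<^sup>+y. ennreal (f y) \<partial>lborel) = 1"
    using fi fnn f1 by (subst nn_integral_eq_integral) auto
  then show ?thesis by (intro prob_spaceI) (simp add: emeasure_density)
qed

lemma pointwise_bound:
  assumes K: "is_kernel K" and fd: "is_density f" and h: "h > 0" and n: "n \<ge> 1"
    and bias: "(\<integral>y. K((x-y)/h)/h * f y \<partial>lborel) = f x"
  shows "(\<integral>\<^sup>+X. ennreal ((kde n K h X x - f x)\<^sup>2) \<partial>sample_law n f)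
     \<le> ennreal (1 / real n) * (\<integral>\<^sup>+v. ennreal (f v) * ennreal ((K((x-v)/h)/h)\<^sup>2) \<partial>lborel)"
proof -
  obtain B where KB: "\<And>x. \<bar>K x\<bar> \<le> B" using K unfolding is_kernel_def by auto
  have Ki: "integrable lborel K" using K unfolding is_kernel_def by auto
  have Km[measurable]: "K \<in> borel_measurable borel"
    using borel_measurable_integrable[OF Ki] by simp
  have fm[measurable]: "f \<in> borel_measurable borel" and fnn: "\<And>x. 0 \<le> f x"
    using fd unfolding is_density_def by auto
  define M where "M = density lborel (\<lambda>x. ennreal (f x))"
  interpret M: prob_space M unfolding M_def by (rule density_prob[OF fd])
  have sM[measurable_cong]: "sets M = sets borel" by (simp add: M_def)
  define Y where "Y = (\<lambda>v. K((x-v)/h)/h)"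
  have Ym[measurable]: "Y \<in> borel_measurable borel" unfolding Y_def by measurable
  have YB: "\<bar>Y v\<bar> \<le> B/h" for v unfolding Y_def using KB h by (simp add: divide_right_mono)
  have vb: "(\<integral>\<^sup>+X. ennreal (((1/real n) * (\<Sum>i<n. Y (X i)) - f x)\<^sup>2) \<partial>Pi\<^sub>M {..<n} (\<lambda>_. M))
      \<le> ennreal ((integral\<^sup>L M Y - f x)\<^sup>2 + (\<integral>v. (Y v)\<^sup>2 \<partial>M) / n)"
    by (rule var_bound[OF M.prob_space_axioms sM n Ym YB])
  have "integral\<^sup>L M Y = (\<integral>y. f y *\<^sub>R Y y \<partial>lborel)"
    unfolding M_def using fnn by (subst integral_density) auto
  also have "\<dots> = f x" using bias by (simp add: Y_def mult.commute)
  finally have mu: "integral\<^sup>L M Y = f x" .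
  have Y2int: "integrable M (\<lambda>y. (Y y)\<^sup>2)"
  proof (rule M.integrable_const_bound[where B="B/h*(B/h)"])
    have "\<bar>Y v * Y v\<bar> \<le> B/h*(B/h)" for v
      using mult_mono[OF YB[of v] YB[of v]] YB[of 0] by (simp add: abs_mult)
    then show "AE v in M. norm ((Y v)\<^sup>2) \<le> B/h*(B/h)" by (simp add: power2_eq_square)
  qed simp
  have nn2: "0 \<le> (\<integral>v. (Y v)\<^sup>2 \<partial>M)" by simp
  have "ennreal ((\<integral>v. (Y v)\<^sup>2 \<partial>M) / n) = ennreal (1/real n) * ennreal (\<integral>v. (Y v)\<^sup>2 \<partial>M)"
    using nn2 by (simp add: ennreal_mult[symmetric] divide_inverse mult.commute)
  also have "ennreal (\<integral>v. (Y v)\<^sup>2 \<partial>M) = (\<integral>\<^sup>+v. ennreal ((Y v)\<^sup>2) \<partial>M)"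
    using Y2int by (subst nn_integral_eq_integral) auto
  also have "\<dots> = (\<integral>\<^sup>+v. ennreal (f v) * ennreal ((K((x-v)/h)/h)\<^sup>2) \<partial>lborel)"
    unfolding M_def Y_def by (subst nn_integral_density) auto
  finally have sig: "ennreal ((\<integral>v. (Y v)\<^sup>2 \<partial>M) / n)
      = ennreal (1/real n) * (\<integral>\<^sup>+v. ennreal (f v) * ennreal ((K((x-v)/h)/h)\<^sup>2) \<partial>lborel)" .
  have kdeq: "kde n K h X x = (1/real n) * (\<Sum>i<n. Y (X i))" for X
    by (simp add: kde_def Y_def)
  have "(\<integral>\<^sup>+X. ennreal (((1/real n) * (\<Sum>i<n. Y (X i)) - f x)\<^sup>2) \<partial>Pi\<^sub>M {..<n} (\<lambda>_. M))
      \<le> ennreal ((\<integral>v. (Y v)\<^sup>2 \<partial>M) / n)" using vb unfolding mu by simp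
  then show ?thesis
    unfolding sample_law_def M_def[symmetric] kdeq sig .
qed




lemma mise_bound:
  assumes K: "is_kernel K" and fd: "is_density f" and h: "h > 0" and n: "n \<ge> 1"
    and bias: "AE x in lborel. (\<integral>y. K((x-y)/h)/h * f y \<partial>lborel) = f x"
  shows "MISE n f K h \<le> ennreal (1 / real n) * ennreal (Rsq K / h)"
proof -
  have Ki: "integrable lborel K" and K2i: "integrable lborel (\<lambda>x. (K x)\<^sup>2)"
    using K unfolding is_kernel_def by auto
  have Km[measurable]: "K \<in> borel_measurable borel"
    using borel_measurable_integrable[OF Ki] by simp
  have fm[measurable]: "f \<in> borel_measurable borel" and fnn: "\<And>x. 0 \<le> f x"
    and fi: "integrable lborel f" and f1: "integral\<^sup>L lborel f = 1"
    using fd unfolding is_density_def by auto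
  define M where "M = density lborel (\<lambda>x. ennreal (f x))"
  interpret M: prob_space M unfolding M_def by (rule density_prob[OF fd])
  have sM[measurable_cong]: "sets M = sets borel" by (simp add: M_def)
  define P where "P = sample_law n f"
  interpret P: prob_space P unfolding P_def sample_law_def M_def[symmetric]
    by (intro prob_space_PiM M.prob_space_axioms)
  interpret PL: pair_sigma_finite P lborel
    unfolding pair_sigma_finite_def
    using P.sigma_finite_measure lborel.sigma_finite_measure_axioms by simp
  have meas: "(\<lambda>(X, x). ennreal ((kde n K h X x - f x)\<^sup>2)) \<in> borel_measurable (P \<Otimes>\<^sub>M lborel)"
    unfolding P_def sample_law_def M_def[symmetric] kde_def by measurable
  have "MISE n f K h = (\<integral>\<^sup>+X. (\<integral>\<^sup>+x. ennreal ((kde n K h X x - f x)\<^sup>2) \<partial>lborel) \<partial>P)"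
    unfolding MISE_def P_def ..
  also have "\<dots> = (\<integral>\<^sup>+x. (\<integral>\<^sup>+X. ennreal ((kde n K h X x - f x)\<^sup>2) \<partial>P) \<partial>lborel)"
    using PL.Fubini'[of "\<lambda>X x. ennreal ((kde n K h X x - f x)\<^sup>2)"] meas by simp
  also have "\<dots> \<le> (\<integral>\<^sup>+x. ennreal (1 / real n) * (\<integral>\<^sup>+v. ennreal (f v) * ennreal ((K((x-v)/h)/h)\<^sup>2) \<partial>lborel) \<partial>lborel)"
    using bias
    by (intro nn_integral_mono_AE) (auto elim!: eventually_mono intro: pointwise_bound[OF K fd h n] simp: P_def)
  also have "\<dots> = ennreal (1 / real n) * (\<integral>\<^sup>+x. (\<integral>\<^sup>+v. ennreal (f v) * ennreal ((K((x-v)/h)/h)\<^sup>2) \<partial>lborel) \<partial>lborel)"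
    by (rule nn_integral_cmult) measurable
  also have "(\<integral>\<^sup>+x. (\<integral>\<^sup>+v. ennreal (f v) * ennreal ((K((x-v)/h)/h)\<^sup>2) \<partial>lborel) \<partial>lborel)
      = (\<integral>\<^sup>+v. (\<integral>\<^sup>+x. ennreal (f v) * ennreal ((K((x-v)/h)/h)\<^sup>2) \<partial>lborel) \<partial>lborel)"
    by (rule lborel_pair.Fubini') measurable
  also have "\<dots> = (\<integral>\<^sup>+v. ennreal (f v) * ennreal (Rsq K / h) \<partial>lborel)"
  proof (intro nn_integral_cong)
    fix v
    have "(\<integral>\<^sup>+x. ennreal ((K((x-v)/h)/h)\<^sup>2) \<partial>lborel)
        = \<bar>h\<bar> * (\<integral>\<^sup>+u. ennreal ((K((v + h*u - v)/h)/h)\<^sup>2) \<partial>lborel)"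
      using h by (intro nn_integral_real_affine) auto
    also have "\<dots> = ennreal h * (\<integral>\<^sup>+u. ennreal (1/(h*h)) * ennreal ((K u)\<^sup>2) \<partial>lborel)"
      using h by (intro arg_cong2[where f="(*)"] nn_integral_cong)
        (auto simp flip: ennreal_mult simp: power2_eq_square)
    also have "\<dots> = ennreal h * (ennreal (1/(h*h)) * ennreal (Rsq K))"
      using K2i by (subst nn_integral_cmult) (auto simp: Rsq_def nn_integral_eq_integral)
    also have "\<dots> = ennreal (Rsq K / h)"
    proof -
      have R0: "0 \<le> Rsq K" unfolding Rsq_def by simp
      have "ennreal h * (ennreal (1/(h*h)) * ennreal (Rsq K)) = ennreal (h * (1/(h*h) * Rsq K))"
      proof -
        have a: "ennreal (1/(h*h)) * ennreal (Rsq K) = ennreal (1/(h*h) * Rsq K)"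
          using h R0 by (intro ennreal_mult[symmetric]) auto
        have b: "ennreal h * ennreal (1/(h*h) * Rsq K) = ennreal (h * (1/(h*h) * Rsq K))"
          using h R0 by (intro ennreal_mult[symmetric]) auto
        show ?thesis unfolding a b ..
      qed
      also have "h * (1/(h*h) * Rsq K) = Rsq K / h" using h by (simp add: field_simps)
      finally show ?thesis .
    qed
    finally have "(\<integral>\<^sup>+x. ennreal ((K((x-v)/h)/h)\<^sup>2) \<partial>lborel) = ennreal (Rsq K / h)" .
    then show "(\<integral>\<^sup>+x. ennreal (f v) * ennreal ((K((x-v)/h)/h)\<^sup>2) \<partial>lborel) = ennreal (f v) * ennreal (Rsq K / h)"
      by (subst nn_integral_cmult) auto
  qed
  also have "\<dots> = ennreal (Rsq K / h)"
  proof -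
    have "(\<integral>\<^sup>+y. ennreal (f y) \<partial>lborel) = 1"
      using fi fnn f1 by (subst nn_integral_eq_integral) auto
    then show ?thesis by (subst nn_integral_multc) auto
  qed
  finally show ?thesis .
qed




theorem mainTheorem5:
  fixes K f :: "real \<Rightarrow> real" and n :: nat
  assumes "is_kernel K"
    and "integrable lborel (\<lambda>x. (K x)\<^sup>2)"
    and "S_K K > 0"
    and "is_density f"
    and "integrable lborel (\<lambda>x. (f x)\<^sup>2)"
    and "0 < D_f f" and "D_f f < \<infinity>"
    and "1 \<le> n"
  shows "of_nat n * Phi n f K \<le> of_nat n * MISE n f K (S_K K / real_of_ereal (D_f f))
       \<and> of_nat n * MISE n f K (S_K K / real_of_ereal (D_f f))
           \<le> ennreal (real_of_ereal (D_f f) * Rsq K / S_K K)"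
proof -
  define Dr where "Dr = real_of_ereal (D_f f)"
  define h where "h = S_K K / Dr"
  have DfDr: "D_f f = ereal Dr" using assms(6,7) unfolding Dr_def by (cases "D_f f") auto
  have Dr0: "Dr > 0" using assms(6) DfDr by simp
  have h0: "h > 0" using h_def assms(3) Dr0 by simp
  have bias: "AE x in lborel. (\<integral>y. K((x-y)/h)/h * f y \<partial>lborel) = f x"
    by (rule bias_zero[OF assms(1,3,4,6,7)]) (simp add: h_def Dr_def)
  have mb: "MISE n f K h \<le> ennreal (1 / real n) * ennreal (Rsq K / h)"
    by (rule mise_bound[OF assms(1,4) h0 assms(8) bias])
  have p1: "Phi n f K \<le> MISE n f K h"
    unfolding Phi_def using h0 by (intro INF_lower) simp
  have "of_nat n * MISE n f K h \<le> of_nat n * (ennreal (1 / real n) * ennreal (Rsq K / h))"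
    by (rule mult_left_mono[OF mb]) simp
  also have "\<dots> = ennreal (real n * (1 / real n)) * ennreal (Rsq K / h)"
  proof -
    have "ennreal (real n) * ennreal (1 / real n) = ennreal (real n * (1 / real n))"
      by (intro ennreal_mult[symmetric]) auto
    then show ?thesis by (simp add: ennreal_of_nat_eq_real_of_nat mult.assoc[symmetric] del: ennreal_mult ennreal_1)
  qed
  also have "\<dots> = ennreal (Dr * Rsq K / S_K K)"
  proof -
    have "real n * (1 / real n) = 1" using assms(8) by simp
    moreover have "Rsq K / h = Dr * Rsq K / S_K K" using h_def assms(3) Dr0 by simp
    ultimately show ?thesis by simp
  qed
  finally have p2: "of_nat n * MISE n f K h \<le> ennreal (Dr * Rsq K / S_K K)" .
  show ?thesis
    using mult_left_mono[OF p1, of "of_nat n"] p2 unfolding h_def Dr_def by simp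
qed


end
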